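(* Let $R$ be a $\delta$-ring, $I$ an ideal of $R$ containing $p$, and $A$ a $\delta$-$R$-algebra which is $I$-adically separated with $A/I^nA$ smooth over $R/I^n$ for all $n\ge1$. Let $T_1,\dots,T_d\in A$ be such that $d(T_i\bmod IA)$ form a basis of $\Omega_{(A/IA)/(R/I)}$. Let $\alpha,\beta\in A$ with $\delta(\alpha)=\alpha\beta$ and let $\partial$ be an $\alpha$-derivation of $A$ over $R$. Then $\partial$ is $\delta$-compatible with respect to $\beta$ if and only if each $T_i$ ($1\le i\le d$) is $\delta$-compatible with respect to $\partial$ and $\beta$.
   Context: $p$ a fixed prime; $\delta$-rings: $\delta(0)=\delta(1)=0$, $\delta(x+y)=\delta(x)+\delta(y)-\sum_{i=1}^{p-1}\frac1p\binom pi x^iy^{p-i}$, $\delta(xy)=\delta(x)y^p+x^p\delta(y)+p\delta(x)\delta(y)$. An $\alpha$-derivation of $A$ over $R$ is an $R$-linear $\partial$ with $\partial(1)=0$, $\partial(xy)=\partial(x)y+x\partial(y)+\alpha\partial(x)\partial(y)$. An element $x\in A$ is $\delta$-compatible with respect to $\partial$ and $\beta$ if $\partial(\delta(x))=(\alpha^{p-1}+p\beta)\delta(\partial(x))+\beta\partial(x)^p-\sum_{\nu=1}^{p-1}\frac1p\binom p\nu x^{p-\nu}\alpha^{\nu-1}\partial(x)^\nu$; $\partial$ is $\delta$-compatible with respect to $\beta$ if every $x\in A$ is. *)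

theory Defs
  imports "HOL-Library.Poly_Mapping" "HOL-Computational_Algebra.Primes"
begin

text \<open>The integer (p choose i)/p, for 0 < i < p, is written of_nat ((p choose i) div p).\<close>

definition delta_ring :: "nat \<Rightarrow> ('r::comm_ring_1 \<Rightarrow> 'r) \<Rightarrow> bool" where
  "delta_ring p \<delta> \<longleftrightarrow>
     \<delta> 0 = 0 \<and> \<delta> 1 = 0 \<and>
     (\<forall>x y. \<delta> (x + y) = \<delta> x + \<delta> y
         - (\<Sum>i\<in>{1..p-1}. of_nat ((p choose i) div p) * x ^ i * y ^ (p - i))) \<and>
     (\<forall>x y. \<delta> (x * y) = \<delta> x * y ^ p + x ^ p * \<delta> y + of_nat p * \<delta> x * \<delta> y)"

definition ring_hom_map :: "('r::comm_ring_1 \<Rightarrow> 'a::comm_ring_1) \<Rightarrow> bool" where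
  "ring_hom_map \<phi> \<longleftrightarrow> \<phi> 1 = 1 \<and> (\<forall>x y. \<phi> (x + y) = \<phi> x + \<phi> y) \<and> (\<forall>x y. \<phi> (x * y) = \<phi> x * \<phi> y)"

definition delta_algebra :: "nat \<Rightarrow> ('r::comm_ring_1 \<Rightarrow> 'r) \<Rightarrow> ('a::comm_ring_1 \<Rightarrow> 'a) \<Rightarrow> ('r \<Rightarrow> 'a) \<Rightarrow> bool" where
  "delta_algebra p \<delta>R \<delta>A \<phi> \<longleftrightarrow> delta_ring p \<delta>R \<and> delta_ring p \<delta>A \<and> ring_hom_map \<phi> \<and>
     (\<forall>r. \<phi> (\<delta>R r) = \<delta>A (\<phi> r))"

definition alpha_derivation :: "('r::comm_ring_1 \<Rightarrow> 'a::comm_ring_1) \<Rightarrow> 'a \<Rightarrow> ('a \<Rightarrow> 'a) \<Rightarrow> bool" where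
  "alpha_derivation \<phi> \<alpha> D \<longleftrightarrow>
     (\<forall>x y. D (x + y) = D x + D y) \<and> (\<forall>r x. D (\<phi> r * x) = \<phi> r * D x) \<and>
     D 1 = 0 \<and> (\<forall>x y. D (x * y) = D x * y + x * D y + \<alpha> * D x * D y)"

definition delta_compatible_elem ::
  "nat \<Rightarrow> ('a::comm_ring_1 \<Rightarrow> 'a) \<Rightarrow> 'a \<Rightarrow> 'a \<Rightarrow> ('a \<Rightarrow> 'a) \<Rightarrow> 'a \<Rightarrow> bool" where
  "delta_compatible_elem p \<delta> \<alpha> \<beta> D x \<longleftrightarrow>
     D (\<delta> x) = (\<alpha> ^ (p - 1) + of_nat p * \<beta>) * \<delta> (D x) + \<beta> * (D x) ^ p
       - (\<Sum>\<nu>\<in>{1..p-1}. of_nat ((p choose \<nu>) div p) * x ^ (p - \<nu>) * \<alpha> ^ (\<nu> - 1) * (D x) ^ \<nu>)"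

definition delta_compatible ::
  "nat \<Rightarrow> ('a::comm_ring_1 \<Rightarrow> 'a) \<Rightarrow> 'a \<Rightarrow> 'a \<Rightarrow> ('a \<Rightarrow> 'a) \<Rightarrow> bool" where
  "delta_compatible p \<delta> \<alpha> \<beta> D \<longleftrightarrow> (\<forall>x. delta_compatible_elem p \<delta> \<alpha> \<beta> D x)"

definition is_ideal :: "'a::comm_ring_1 set \<Rightarrow> bool" where
  "is_ideal I \<longleftrightarrow> 0 \<in> I \<and> (\<forall>x\<in>I. \<forall>y\<in>I. x + y \<in> I) \<and> (\<forall>a. \<forall>x\<in>I. a * x \<in> I)"

inductive_set ideal_gen :: "'a::comm_ring_1 set \<Rightarrow> 'a set" for S where
  gen_zero: "0 \<in> ideal_gen S"
| gen_mult: "s \<in> S \<Longrightarrow> a * s \<in> ideal_gen S"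
| gen_add: "x \<in> ideal_gen S \<Longrightarrow> y \<in> ideal_gen S \<Longrightarrow> x + y \<in> ideal_gen S"

fun ideal_pow :: "'a::comm_ring_1 set \<Rightarrow> nat \<Rightarrow> 'a set" where
  "ideal_pow I 0 = UNIV"
| "ideal_pow I (Suc n) = ideal_gen {x * y | x y. x \<in> I \<and> y \<in> ideal_pow I n}"

definition ext_ideal :: "('r::comm_ring_1 \<Rightarrow> 'a::comm_ring_1) \<Rightarrow> 'r set \<Rightarrow> 'a set" where
  "ext_ideal \<phi> J = ideal_gen (\<phi> ` J)"

definition adically_separated :: "('r::comm_ring_1 \<Rightarrow> 'a::comm_ring_1) \<Rightarrow> 'r set \<Rightarrow> bool" where
  "adically_separated \<phi> I \<longleftrightarrow> (\<Inter>n\<in>{1..}. ext_ideal \<phi> (ideal_pow I n)) = {0}"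

type_synonym 'r mpoly = "(nat \<Rightarrow>\<^sub>0 nat) \<Rightarrow>\<^sub>0 'r"

definition poly_vars_below :: "nat \<Rightarrow> 'r::comm_ring_1 mpoly set" where
  "poly_vars_below N = {P. \<forall>m\<in>Poly_Mapping.keys P. Poly_Mapping.keys m \<subseteq> {..<N}}"

definition const_poly :: "'r::comm_ring_1 \<Rightarrow> 'r mpoly" where
  "const_poly c = Poly_Mapping.single 0 c"

definition peval :: "('r::comm_ring_1 \<Rightarrow> 'a::comm_ring_1) \<Rightarrow> (nat \<Rightarrow> 'a) \<Rightarrow> 'r mpoly \<Rightarrow> 'a" where
  "peval \<phi> x P = (\<Sum>m\<in>Poly_Mapping.keys P. \<phi> (Poly_Mapping.lookup P m) * (\<Prod>j\<in>Poly_Mapping.keys m. x j ^ Poly_Mapping.lookup m j))"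

definition peval_pderiv :: "('r::comm_ring_1 \<Rightarrow> 'a::comm_ring_1) \<Rightarrow> (nat \<Rightarrow> 'a) \<Rightarrow> nat \<Rightarrow> 'r mpoly \<Rightarrow> 'a" where
  "peval_pderiv \<phi> x i P = (\<Sum>m\<in>Poly_Mapping.keys P. \<phi> (Poly_Mapping.lookup P m) * of_nat (Poly_Mapping.lookup m i) * x i ^ (Poly_Mapping.lookup m i - 1)
        * (\<Prod>j\<in>Poly_Mapping.keys m - {i}. x j ^ Poly_Mapping.lookup m j))"

section \<open>Smoothness of A/J over R/K (Stacks 00T2: finite presentation + naive cotangent
  complex quasi-isomorphic to a finite projective module in degree 0)\<close>

text \<open>Here K is an ideal of R, J an ideal of A with phi(K) in J; the R/K-algebra A/J is presented by
  R/K[x_0..x_{N-1}] -> A/J, x_i |-> a_i mod J.  Ker is the preimage in R[x] of the kernel.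
  Conditions: (i) surjective; (ii) kernel finitely generated (mod K R[x]);
  (iii) H_1(NL) = 0, i.e. Kbar/Kbar^2 -> (A/J)^N, g |-> (dg/dx_i) is injective;
  (iv) H_0(NL) = coker finite projective, i.e. the image of (iii) is a direct summand of (A/J)^N,
  given by an idempotent matrix E over A/J with image equal to it.\<close>
definition smooth_quot :: "('r::comm_ring_1 \<Rightarrow> 'a::comm_ring_1) \<Rightarrow> 'r set \<Rightarrow> 'a set \<Rightarrow> bool" where
  "smooth_quot \<phi> K J \<longleftrightarrow>
    (\<exists>(N::nat) (a::nat \<Rightarrow> 'a) (G::'r mpoly set).
      let Ker = {P \<in> poly_vars_below N. peval \<phi> a P \<in> J} in
      finite G \<and> G \<subseteq> poly_vars_below N \<and>
      (\<forall>y. \<exists>P\<in>poly_vars_below N. y - peval \<phi> a P \<in> J) \<and>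
      Ker = ideal_gen (G \<union> const_poly ` K) \<inter> poly_vars_below N \<and>
      (\<forall>g\<in>Ker. (\<forall>i<N. peval_pderiv \<phi> a i g \<in> J) \<longrightarrow>
          g \<in> ideal_gen ({g1 * g2 | g1 g2. g1 \<in> Ker \<and> g2 \<in> Ker} \<union> const_poly ` K)) \<and>
      (\<exists>E::nat \<Rightarrow> nat \<Rightarrow> 'a.
          (\<forall>i<N. \<forall>j<N. (\<Sum>k<N. E i k * E k j) - E i j \<in> J) \<and>
          (\<forall>g\<in>Ker. \<forall>i<N. (\<Sum>k<N. E i k * peval_pderiv \<phi> a k g) - peval_pderiv \<phi> a i g \<in> J) \<and>
          (\<forall>w::nat \<Rightarrow> 'a. \<exists>g\<in>Ker. \<forall>i<N. (\<Sum>k<N. E i k * w k) - peval_pderiv \<phi> a i g \<in> J)))"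

text \<open>Omega_{(A/J)/(R/K)} is the free A-module on symbols dc (c in A), encoded as finitely supported
  maps 'a =>0 'a (symbol c |-> coefficient), modulo the A-submodule generated by additivity, Leibniz,
  d(phi r) = 0 and J-multiples (J contains phi(K)).\<close>
inductive_set kahler_rel :: "('r::comm_ring_1 \<Rightarrow> 'a::comm_ring_1) \<Rightarrow> 'a set \<Rightarrow> ('a \<Rightarrow>\<^sub>0 'a) set"
  for \<phi> J where
  kr_zero: "0 \<in> kahler_rel \<phi> J"
| kr_add_rel: "Poly_Mapping.single (c + c') b - Poly_Mapping.single c b - Poly_Mapping.single c' b \<in> kahler_rel \<phi> J"
| kr_leibniz: "Poly_Mapping.single (c * c') b - Poly_Mapping.single c' (b * c) - Poly_Mapping.single c (b * c') \<in> kahler_rel \<phi> J"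
| kr_const: "Poly_Mapping.single (\<phi> r) b \<in> kahler_rel \<phi> J"
| kr_ideal: "x \<in> J \<Longrightarrow> Poly_Mapping.single c x \<in> kahler_rel \<phi> J"
| kr_plus: "u \<in> kahler_rel \<phi> J \<Longrightarrow> v \<in> kahler_rel \<phi> J \<Longrightarrow> u + v \<in> kahler_rel \<phi> J"

definition kahler_basis :: "('r::comm_ring_1 \<Rightarrow> 'a::comm_ring_1) \<Rightarrow> 'a set \<Rightarrow> nat \<Rightarrow> (nat \<Rightarrow> 'a) \<Rightarrow> bool" where
  "kahler_basis \<phi> J d T \<longleftrightarrow>
     (\<forall>c. \<exists>b::nat \<Rightarrow> 'a. Poly_Mapping.single c 1 - (\<Sum>i<d. Poly_Mapping.single (T i) (b i)) \<in> kahler_rel \<phi> J) \<and>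
     (\<forall>b::nat \<Rightarrow> 'a. (\<Sum>i<d. Poly_Mapping.single (T i) (b i)) \<in> kahler_rel \<phi> J \<longrightarrow> (\<forall>i<d. b i \<in> J))"

end

theory Submission
  imports Defs "HOL-Computational_Algebra.Polynomial"
begin


lemma rhm_0: "ring_hom_map h \<Longrightarrow> h 0 = 0"
  unfolding ring_hom_map_def by (metis add_cancel_right_right)
lemma rhm_1: "ring_hom_map h \<Longrightarrow> h 1 = 1"
  unfolding ring_hom_map_def by auto
lemma rhm_add: "ring_hom_map h \<Longrightarrow> h (a + b) = h a + h b"
  unfolding ring_hom_map_def by auto
lemma rhm_mult: "ring_hom_map h \<Longrightarrow> h (a * b) = h a * h b"
  unfolding ring_hom_map_def by auto
lemma rhm_uminus: "ring_hom_map h \<Longrightarrow> h (- a) = - h a"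
  by (metis add_eq_0_iff2 rhm_0 rhm_add add.right_inverse)
lemma rhm_diff: "ring_hom_map h \<Longrightarrow> h (a - b) = h a - h b"
  by (metis diff_conv_add_uminus rhm_add rhm_uminus)
lemma rhm_power: "ring_hom_map h \<Longrightarrow> h (a ^ n) = h a ^ n"
  by (induction n) (simp_all add: rhm_1 rhm_mult)
lemma rhm_of_nat: "ring_hom_map h \<Longrightarrow> h (of_nat n) = of_nat n"
  by (induction n) (simp_all add: rhm_0 rhm_1 rhm_add)
lemma rhm_sum: "ring_hom_map h \<Longrightarrow> h (sum f A) = (\<Sum>i\<in>A. h (f i))"
  by (induction A rule: infinite_finite_induct) (simp_all add: rhm_0 rhm_add)

definition evp :: "('b::comm_ring_1 \<Rightarrow> 'a::comm_ring_1) \<Rightarrow> 'a \<Rightarrow> 'b poly \<Rightarrow> 'a" where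
  "evp e z q = poly (map_poly e q) z"

lemma map_poly_add_hom:
  assumes "ring_hom_map e"
  shows "map_poly e (p + q) = map_poly e p + map_poly e q"
  by (intro poly_eqI) (simp add: coeff_map_poly rhm_0[OF assms] rhm_add[OF assms])

lemma map_poly_mult_hom:
  assumes "ring_hom_map e"
  shows "map_poly e (p * q) = map_poly e p * map_poly e q"
proof (induction p)
  case (pCons a p)
  have "map_poly e (pCons a p * q) = map_poly e (smult a q) + map_poly e (pCons 0 (p * q))"
    by (simp add: map_poly_add_hom[OF assms])
  also have "\<dots> = smult (e a) (map_poly e q) + pCons 0 (map_poly e p * map_poly e q)"
    by (simp add: map_poly_smult map_poly_pCons rhm_0[OF assms] rhm_mult[OF assms] pCons.IH)
  also have "\<dots> = map_poly e (pCons a p) * map_poly e q"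
    by (simp add: map_poly_pCons rhm_0[OF assms])
  finally show ?case .
qed simp

lemma evp_hom: "ring_hom_map e \<Longrightarrow> ring_hom_map (evp e z)"
  unfolding ring_hom_map_def[of "evp e z"] evp_def
  by (simp add: map_poly_add_hom map_poly_mult_hom rhm_1)

lemma evp_const: "ring_hom_map e \<Longrightarrow> evp e z [:c:] = e c"
  by (simp add: evp_def map_poly_pCons rhm_0)
lemma evp_X: "ring_hom_map e \<Longrightarrow> evp e z [:0, 1:] = z"
  by (simp add: evp_def map_poly_pCons rhm_0 rhm_1)

lemma of_int_hom: "ring_hom_map (of_int :: int \<Rightarrow> 'a::comm_ring_1)"
  by (simp add: ring_hom_map_def)

type_synonym u1 = "int poly"
type_synonym u2 = "u1 poly"
type_synonym u3 = "u2 poly"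
type_synonym u4 = "u3 poly"
type_synonym u5 = "u4 poly"
type_synonym u6 = "u5 poly"
type_synonym u7 = "u6 poly"
type_synonym u8 = "u7 poly"
type_synonym u9 = "u8 poly"
type_synonym u10 = "u9 poly"
type_synonym u11 = "u10 poly"
type_synonym u12 = "u11 poly"

definition ev12 :: "(nat \<Rightarrow> 'a::comm_ring_1) \<Rightarrow> u12 \<Rightarrow> 'a" where
  "ev12 x = evp (evp (evp (evp (evp (evp (evp (evp (evp (evp (evp (evp of_int (x 1)) (x 2)) (x 3)) (x 4))
     (x 5)) (x 6)) (x 7)) (x 8)) (x 9)) (x 10)) (x 11)) (x 12)"

lemma ev12_hom: "ring_hom_map (ev12 x)"
  unfolding ev12_def by (intro evp_hom of_int_hom)

definition V :: "nat \<Rightarrow> u12" where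
  "V k = (if k = 12 then [:0,1:] else if k = 11 then [:[:0,1:]:] else if k = 10 then [:[:[:0,1:]:]:]
    else if k = 9 then [:[:[:[:0,1:]:]:]:] else if k = 8 then [:[:[:[:[:0,1:]:]:]:]:]
    else if k = 7 then [:[:[:[:[:[:0,1:]:]:]:]:]:]
    else if k = 6 then [:[:[:[:[:[:[:0,1:]:]:]:]:]:]:]
    else if k = 5 then [:[:[:[:[:[:[:[:0,1:]:]:]:]:]:]:]:]
    else if k = 4 then [:[:[:[:[:[:[:[:[:0,1:]:]:]:]:]:]:]:]:]
    else if k = 3 then [:[:[:[:[:[:[:[:[:[:0,1:]:]:]:]:]:]:]:]:]:]
    else if k = 2 then [:[:[:[:[:[:[:[:[:[:[:0,1:]:]:]:]:]:]:]:]:]:]:]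
    else [:[:[:[:[:[:[:[:[:[:[:[:0,1:]:]:]:]:]:]:]:]:]:]:]:])"

lemma ev12_V: assumes "k \<in> {1..12}" shows "ev12 x (V k) = x k"
proof -
  note assms
  then have "k = 1 \<or> k = 2 \<or> k = 3 \<or> k = 4 \<or> k = 5 \<or> k = 6 \<or> k = 7 \<or> k = 8 \<or> k = 9 \<or> k = 10 \<or> k = 11 \<or> k = 12"
    by (simp add: atLeastAtMost_iff) presburger
  then show ?thesis unfolding ev12_def V_def
    by (elim disjE) (simp_all add: evp_const evp_X evp_hom of_int_hom)
qed

lemma V_nz: "V k \<noteq> 0"
  unfolding V_def by auto

lemma cancel_u12: "of_nat p * V k * a = of_nat p * V k * b \<Longrightarrow> p > 0 \<Longrightarrow> a = (b::u12)"
  using V_nz[of k] by (simp add: of_nat_eq_0_iff)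



definition cS :: "nat \<Rightarrow> 'a::comm_ring_1 \<Rightarrow> 'a \<Rightarrow> 'a" where
  "cS p a b = (\<Sum>i\<in>{1..p-1}. of_nat ((p choose i) div p) * a ^ i * b ^ (p - i))"

definition Pn :: "nat \<Rightarrow> 'a::comm_ring_1 \<Rightarrow> 'a \<Rightarrow> 'a \<Rightarrow> 'a" where
  "Pn n al x X = (\<Sum>k\<in>{1..n}. of_nat (n choose k) * x ^ (n - k) * al ^ (k - 1) * X ^ k)"

definition Qf :: "nat \<Rightarrow> 'a::comm_ring_1 \<Rightarrow> 'a \<Rightarrow> 'a \<Rightarrow> 'a \<Rightarrow> 'a \<Rightarrow> 'a" where
  "Qf p al be x X dX = (al ^ (p - 1) + of_nat p * be) * dX + be * X ^ p
       - (\<Sum>\<nu>\<in>{1..p-1}. of_nat ((p choose \<nu>) div p) * x ^ (p - \<nu>) * al ^ (\<nu> - 1) * X ^ \<nu>)"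

definition DS :: "nat \<Rightarrow> 'a::comm_ring_1 \<Rightarrow> 'a \<Rightarrow> 'a \<Rightarrow> 'a \<Rightarrow> 'a \<Rightarrow> 'a" where
  "DS p al x X y Y = (\<Sum>i\<in>{1..p-1}. of_nat ((p choose i) div p) *
      (Pn i al x X * y ^ (p - i) + x ^ i * Pn (p - i) al y Y + al * Pn i al x X * Pn (p - i) al y Y))"

lemma choose_div_mult:
  assumes "prime p" "i \<in> {1..p-1}"
  shows "(of_nat p :: 'a::comm_ring_1) * of_nat ((p choose i) div p) = of_nat (p choose i)"
proof -
  have "p dvd (p choose i)"
    using assms by (intro dvd_choose_prime) (auto simp: prime_gt_0_nat)
  then show ?thesis by (metis dvd_mult_div_cancel of_nat_mult)
qed


lemma t1: "p \<ge> 1 \<Longrightarrow> {0..p} = insert 0 (insert p {1..(p::nat)-1})" by auto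

lemma t2: "p \<ge> 1 \<Longrightarrow> (\<Sum>i\<in>insert 0 (insert p {1..p-1}). of_nat (p choose i) * a ^ i * b ^ (p - i))
      = b ^ p + (a ^ p + (\<Sum>i\<in>{1..p-1}. of_nat (p choose i) * (a::'a::comm_ring_1) ^ i * b ^ (p - i)))"
  by (simp add: sum.insert)

lemma t3: "prime p \<Longrightarrow> (\<Sum>i\<in>{1..p-1}. of_nat (p choose i) * a ^ i * b ^ (p - i)) = of_nat p * cS p a (b::'a::comm_ring_1)"
    unfolding cS_def sum_distrib_left
    by (rule sum.cong) (auto simp: choose_div_mult[symmetric] mult.assoc)
lemma t4: "(a + b) ^ p = (\<Sum>i\<le>p. of_nat (p choose i) * a ^ i * (b::'a::comm_ring_1) ^ (p - i))"
    by (simp add: binomial_ring)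


lemma t5: "(a + b) ^ p = (\<Sum>i\<in>{0..p}. of_nat (p choose i) * a ^ i * (b::'a::comm_ring_1) ^ (p - i))"
    unfolding t4 by (simp add: atLeast0AtMost)

lemma t6: "p \<ge> 1 \<Longrightarrow> prime p \<Longrightarrow> (\<Sum>i\<in>{0..p}. of_nat (p choose i) * a ^ i * (b::'a::comm_ring_1) ^ (p - i)) = b ^ p + (a ^ p + of_nat p * cS p a b)"
  by (simp only: t1 t2 t3)
lemma t7: "(a + b) ^ p = b ^ p + (a ^ p + X) \<Longrightarrow> X = (a + b) ^ p - a ^ p - (b::'a::comm_ring_1) ^ p"
  by simp

lemma G2:
  assumes "prime p"
  shows "of_nat p * cS p a b = (a + b) ^ p - a ^ p - (b::'a::comm_ring_1) ^ p"
proof -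
  have p1: "p \<ge> 1" using prime_gt_0_nat[OF assms] by simp
  show ?thesis by (rule t7, rule trans[OF t5 t6[OF p1 assms]])
qed
lemma G1: "al * Pn n al x X = (x + al * X) ^ n - (x::'a::comm_ring_1) ^ n"
proof -
  have "(x + al * X) ^ n = (\<Sum>k\<le>n. of_nat (n choose k) * (al * X) ^ k * x ^ (n - k))"
    by (simp add: binomial_ring add.commute[of x])
  also have "\<dots> = (\<Sum>k\<in>{0..n}. of_nat (n choose k) * (al * X) ^ k * x ^ (n - k))"
    by (simp add: atLeast0AtMost)
  also have "{0..n} = insert 0 {1..n}" by auto
  also have "(\<Sum>k\<in>insert 0 {1..n}. of_nat (n choose k) * (al * X) ^ k * x ^ (n - k))
     = x ^ n + (\<Sum>k\<in>{1..n}. of_nat (n choose k) * (al * X) ^ k * x ^ (n - k))"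
    by (subst sum.insert; auto)
  also have "(\<Sum>k\<in>{1..n}. of_nat (n choose k) * (al * X) ^ k * x ^ (n - k)) = al * Pn n al x X"
    unfolding Pn_def sum_distrib_left
  proof (rule sum.cong)
    fix k assume "k \<in> {1..n}"
    then have "al ^ k = al * al ^ (k - 1)" by (cases k) auto
    then show "of_nat (n choose k) * (al * X) ^ k * x ^ (n - k) =
       al * (of_nat (n choose k) * x ^ (n - k) * al ^ (k - 1) * X ^ k)"
      by (simp add: power_mult_distrib)
  qed simp
  finally show ?thesis by simp
qed

lemma G3:
  assumes "prime p"
  shows "of_nat p * al * Qf p al be x X dX =
     (al ^ p + of_nat p * al * be) * (X ^ p + of_nat p * dX) + x ^ p - (x + al * X) ^ (p::nat)"
proof -
  have p1: "p \<ge> 1" using prime_gt_0_nat[OF assms] by simp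
  have s: "al * (\<Sum>\<nu>\<in>{1..p-1}. of_nat ((p choose \<nu>) div p) * x ^ (p - \<nu>) * al ^ (\<nu> - 1) * X ^ \<nu>)
     = cS p (al * X) x"
    unfolding cS_def sum_distrib_left
  proof (rule sum.cong)
    fix k assume "k \<in> {1..p-1}"
    then have "al ^ k = al * al ^ (k - 1)" by (cases k) auto
    then show "al * (of_nat ((p choose k) div p) * x ^ (p - k) * al ^ (k - 1) * X ^ k) =
       of_nat ((p choose k) div p) * (al * X) ^ k * x ^ (p - k)"
      by (simp add: power_mult_distrib)
  qed simp
  have ap: "al ^ p = al * al ^ (p - 1)" using p1 by (cases p) auto
  have "of_nat p * al * Qf p al be x X dX = of_nat p * (al * al ^ (p - 1)) * dX + of_nat p * of_nat p * al * be * dX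
     + of_nat p * al * be * X ^ p - of_nat p * cS p (al * X) x"
    unfolding Qf_def s[symmetric] by (simp add: algebra_simps)
  also have "\<dots> = of_nat p * al ^ p * dX + of_nat p * of_nat p * al * be * dX
     + of_nat p * al * be * X ^ p - ((al * X + x) ^ p - (al * X) ^ p - x ^ p)"
    by (simp add: G2[OF assms] ap)
  finally show ?thesis by (simp add: algebra_simps power_mult_distrib)
qed


lemma G1': "al * (Pn i al x X * y ^ j + x ^ i * Pn j al y Y + al * Pn i al x X * Pn j al y Y)
   = (x + al * X) ^ i * (y + al * Y) ^ j - x ^ i * (y::'a::comm_ring_1) ^ j"
proof -
  have "al * (Pn i al x X * y ^ j + x ^ i * Pn j al y Y + al * Pn i al x X * Pn j al y Y)
     = (al * Pn i al x X) * y ^ j + x ^ i * (al * Pn j al y Y) + (al * Pn i al x X) * (al * Pn j al y Y)"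
    by (simp add: algebra_simps)
  also have "\<dots> = (x + al * X) ^ i * (y + al * Y) ^ j - x ^ i * y ^ j"
    unfolding G1 by (simp add: algebra_simps)
  finally show ?thesis .
qed

lemma DSg:
  assumes "prime p"
  shows "of_nat p * al * DS p al x X y Y = ((x + al * X) + (y + al * Y)) ^ p - (x + al * X) ^ p - (y + al * Y) ^ p
     - ((x + y) ^ p - x ^ p - (y::'a::comm_ring_1) ^ p)"
proof -
  have "of_nat p * al * DS p al x X y Y = (\<Sum>i\<in>{1..p-1}. of_nat p * of_nat ((p choose i) div p) *
      (al * (Pn i al x X * y ^ (p - i) + x ^ i * Pn (p - i) al y Y + al * Pn i al x X * Pn (p - i) al y Y)))"
    unfolding DS_def sum_distrib_left by (rule sum.cong) (simp_all add: algebra_simps)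
  also have "\<dots> = (\<Sum>i\<in>{1..p-1}. of_nat p * of_nat ((p choose i) div p) *
      ((x + al * X) ^ i * (y + al * Y) ^ (p - i) - x ^ i * y ^ (p - i)))"
    unfolding G1' ..
  also have "\<dots> = of_nat p * cS p (x + al * X) (y + al * Y) - of_nat p * cS p x y"
    unfolding cS_def sum_distrib_left sum_subtractf[symmetric]
    by (rule sum.cong) (simp_all add: algebra_simps)
  finally show ?thesis unfolding G2[OF assms] .
qed

lemma I1g:
  assumes "prime p"
  shows "of_nat p * al * Qf p al be (x + y) (X + Y) (dX + dY - cS p X Y)
    = of_nat p * al * (Qf p al be x X dX + Qf p al be y Y dY - DS p al x X y (Y::'a::comm_ring_1))"
proof -
  have "of_nat p * al * Qf p al be (x + y) (X + Y) (dX + dY - cS p X Y)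
     = (al ^ p + of_nat p * al * be) * ((X + Y) ^ p + of_nat p * dX + of_nat p * dY - of_nat p * cS p X Y)
       + (x + y) ^ p - (x + y + al * (X + Y)) ^ p"
    unfolding G3[OF assms] by (simp add: algebra_simps)
  also have "\<dots> = (al ^ p + of_nat p * al * be) * ((X ^ p + of_nat p * dX) + (Y ^ p + of_nat p * dY))
       + (x + y) ^ p - (x + y + al * (X + Y)) ^ p"
    unfolding G2[OF assms] by (simp add: algebra_simps)
  also have "\<dots> = of_nat p * al * Qf p al be x X dX + of_nat p * al * Qf p al be y Y dY
      - of_nat p * al * DS p al x X y Y"
    unfolding G3[OF assms] DSg[OF assms]
    by (simp add: algebra_simps)
  finally show ?thesis by (simp add: algebra_simps)
qed

lemmas rhm_simps = rhm_add rhm_mult rhm_diff rhm_power rhm_of_nat rhm_sum rhm_0 rhm_1 rhm_uminus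

lemma hom_cS: "ring_hom_map h \<Longrightarrow> h (cS p a b) = cS p (h a) (h b)"
  unfolding cS_def by (simp add: rhm_simps)
lemma hom_Pn: "ring_hom_map h \<Longrightarrow> h (Pn n al x X) = Pn n (h al) (h x) (h X)"
  unfolding Pn_def by (simp add: rhm_simps)
lemma hom_Qf: "ring_hom_map h \<Longrightarrow> h (Qf p al be x X dX) = Qf p (h al) (h be) (h x) (h X) (h dX)"
  unfolding Qf_def by (simp add: rhm_simps)
lemma hom_DS: "ring_hom_map h \<Longrightarrow> h (DS p al x X y Y) = DS p (h al) (h x) (h X) (h y) (h Y)"
  unfolding DS_def by (simp add: rhm_simps hom_Pn)

lemma I1:
  assumes "prime p"
  shows "Qf p al be (x + y) (X + Y) (dX + dY - cS p X Y)
    = Qf p al be x X dX + Qf p al be y Y dY - DS p al x X y (Y::'a::comm_ring_1)"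
proof -
  define xs :: "nat \<Rightarrow> 'a" where "xs = (\<lambda>k. if k = 1 then x else if k = 2 then y else if k = 3 then X
     else if k = 4 then Y else if k = 5 then dX else if k = 6 then dY else if k = 7 then al else be)"
  have p0: "p > 0" using prime_gt_0_nat[OF assms] .
  have u: "Qf p (V 7) (V 8) (V 1 + V 2) (V 3 + V 4) (V 5 + V 6 - cS p (V 3) (V 4))
    = Qf p (V 7) (V 8) (V 1) (V 3) (V 5) + Qf p (V 7) (V 8) (V 2) (V 4) (V 6) - DS p (V 7) (V 1) (V 3) (V 2) (V 4)"
    by (rule cancel_u12[OF I1g[OF assms] p0])
  have "ev12 xs (Qf p (V 7) (V 8) (V 1 + V 2) (V 3 + V 4) (V 5 + V 6 - cS p (V 3) (V 4)))
    = ev12 xs (Qf p (V 7) (V 8) (V 1) (V 3) (V 5) + Qf p (V 7) (V 8) (V 2) (V 4) (V 6) - DS p (V 7) (V 1) (V 3) (V 2) (V 4))"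
    unfolding u ..
  then show ?thesis
    by (simp add: ev12_hom rhm_simps hom_Qf hom_DS hom_cS ev12_V xs_def)
qed

definition dmul :: "nat \<Rightarrow> 'a::comm_ring_1 \<Rightarrow> 'a \<Rightarrow> 'a \<Rightarrow> 'a \<Rightarrow> 'a" where
  "dmul p a b da db = da * b ^ p + a ^ p * db + of_nat p * da * db"

definition Zf :: "'a::comm_ring_1 \<Rightarrow> 'a \<Rightarrow> 'a \<Rightarrow> 'a \<Rightarrow> 'a \<Rightarrow> 'a" where
  "Zf al x X y Y = X * y + x * Y + al * X * Y"

definition dZf :: "nat \<Rightarrow> 'a::comm_ring_1 \<Rightarrow> 'a \<Rightarrow> 'a \<Rightarrow> 'a \<Rightarrow> 'a \<Rightarrow> 'a \<Rightarrow> 'a \<Rightarrow> 'a \<Rightarrow> 'a \<Rightarrow> 'a \<Rightarrow> 'a" where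
  "dZf p al be x X dx dX y Y dy dY = dmul p X y dX dy + dmul p x Y dx dY - cS p (X * y) (x * Y)
     + dmul p (al * X) Y (dmul p al X (al * be) dX) dY - cS p (X * y + x * Y) (al * X * Y)"

definition DMf :: "nat \<Rightarrow> 'a::comm_ring_1 \<Rightarrow> 'a \<Rightarrow> 'a \<Rightarrow> 'a \<Rightarrow> 'a \<Rightarrow> 'a \<Rightarrow> 'a \<Rightarrow> 'a \<Rightarrow> 'a \<Rightarrow> 'a" where
  "DMf p al x X dx ddx y Y dy ddy = ddx * y ^ p + dx * Pn p al y Y + al * ddx * Pn p al y Y
     + (Pn p al x X * dy + x ^ p * ddy + al * Pn p al x X * ddy)
     + of_nat p * (ddx * dy + dx * ddy + al * ddx * ddy)"

definition Uf :: "nat \<Rightarrow> 'a::comm_ring_1 \<Rightarrow> 'a \<Rightarrow> 'a \<Rightarrow> 'a \<Rightarrow> 'a \<Rightarrow> 'a" where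
  "Uf p al x X dx ddx = x ^ p + of_nat p * dx + al * (Pn p al x X + of_nat p * ddx)"

lemma mulF: "(a * b) ^ p + of_nat p * dmul p a b da db = (a ^ p + of_nat p * da) * (b ^ p + of_nat p * (db::'a::comm_ring_1))"
  unfolding dmul_def by (simp add: algebra_simps power_mult_distrib)

lemma addF: "prime p \<Longrightarrow> (a + b) ^ p + of_nat p * (da + db - cS p a b) = (a ^ p + of_nat p * da) + (b ^ p + of_nat p * (db::'a::comm_ring_1))"
  by (simp add: algebra_simps G2)

lemma ZdZ:
  assumes "prime p"
  shows "Zf al x X y Y ^ p + of_nat p * dZf p al be x X dx dX y Y dy dY
    = (X ^ p + of_nat p * dX) * (y ^ p + of_nat p * dy) + (x ^ p + of_nat p * dx) * (Y ^ p + of_nat p * dY)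
      + (al ^ p + of_nat p * al * be) * (X ^ p + of_nat p * dX) * (Y ^ p + of_nat p * (dY::'a::comm_ring_1))"
proof -
  have "Zf al x X y Y ^ p + of_nat p * dZf p al be x X dx dX y Y dy dY
     = ((X * y) ^ p + of_nat p * dmul p X y dX dy) + ((x * Y) ^ p + of_nat p * dmul p x Y dx dY)
       + ((al * X * Y) ^ p + of_nat p * dmul p (al * X) Y (dmul p al X (al * be) dX) dY)"
  proof -
    have "Zf al x X y Y ^ p + of_nat p * dZf p al be x X dx dX y Y dy dY
      = ((X * y + x * Y) ^ p + of_nat p * (dmul p X y dX dy + dmul p x Y dx dY - cS p (X * y) (x * Y)))
        + ((al * X * Y) ^ p + of_nat p * dmul p (al * X) Y (dmul p al X (al * be) dX) dY)"
      unfolding Zf_def dZf_def using addF[OF assms, of "X * y + x * Y" "al * X * Y"]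
      by (simp add: algebra_simps)
    then show ?thesis using addF[OF assms, of "X * y" "x * Y"] by simp
  qed
  also have "\<dots> = (X ^ p + of_nat p * dX) * (y ^ p + of_nat p * dy) + (x ^ p + of_nat p * dx) * (Y ^ p + of_nat p * dY)
      + ((al * X) ^ p + of_nat p * dmul p al X (al * be) dX) * (Y ^ p + of_nat p * dY)"
    by (simp only: mulF)
  also have "(al * X) ^ p + of_nat p * dmul p al X (al * be) dX = (al ^ p + of_nat p * (al * be)) * (X ^ p + of_nat p * dX)"
    by (rule mulF)
  finally show ?thesis by (simp add: algebra_simps)
qed

lemma abstrDM:
  fixes n al :: "'a::comm_ring_1"
  assumes h1: "al * Px = xq - xp" and h2: "al * Py = yq - yp"
  shows "n * al * (ddx * yp + dx * Py + al * ddx * Py + (Px * dy + xp * ddy + al * Px * ddy) + n * (ddx * dy + dx * ddy + al * ddx * ddy))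
    = (xq + n * dx + n * al * ddx) * (yq + n * dy + n * al * ddy) - xq * yq - n * (dx * yp + xp * dy + n * dx * dy)"
proof -
  have "n * al * (ddx * yp + dx * Py + al * ddx * Py + (Px * dy + xp * ddy + al * Px * ddy) + n * (ddx * dy + dx * ddy + al * ddx * ddy))
    = n * al * ddx * yp + n * dx * (al * Py) + n * al * ddx * (al * Py) + n * (al * Px) * dy + n * al * xp * ddy
      + n * al * (al * Px) * ddy + n * al * n * (ddx * dy + dx * ddy + al * ddx * ddy)"
    by (simp add: algebra_simps)
  also have "\<dots> = (xq + n * dx + n * al * ddx) * (yq + n * dy + n * al * ddy) - xq * yq - n * (dx * yp + xp * dy + n * dx * dy)"
    unfolding h1 h2 by (simp add: algebra_simps)
  finally show ?thesis .
qed

lemma abstrFinal: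
  fixes n al :: "'a::comm_ring_1"
  assumes h1: "al * Px = xq - xp" and h2: "al * Py = yq - yp"
    and h3: "n * al * Qx = (ap + n * al * be) * (Xp + n * dX) + xp - xq"
    and h4: "n * al * Qy = (ap + n * al * be) * (Yp + n * dY) + yp - yq"
    and h5: "n * al * QZ = (ap + n * al * be) * ((Xp + n * dX) * (yp + n * dy) + (xp + n * dx) * (Yp + n * dY)
      + (ap + n * al * be) * (Xp + n * dX) * (Yp + n * dY)) + xp * yp - xq * yq"
    and h6: "n * al * DM = (xq + n * dx + n * al * ddx) * (yq + n * dy + n * al * ddy) - xq * yq - n * (dx * yp + xp * dy + n * dx * dy)"
  shows "n * al * (DM - QZ) = n * al * ((ddx - Qx) * (yp + n * dy + al * (Py + n * ddy))
     + (xp + n * dx + al * (Px + n * ddx)) * (ddy - Qy) - n * al * (ddx - Qx) * (ddy - Qy))"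
proof -
  have "n * al * ((ddx - Qx) * (yp + n * dy + al * (Py + n * ddy))
     + (xp + n * dx + al * (Px + n * ddx)) * (ddy - Qy) - n * al * (ddx - Qx) * (ddy - Qy))
    = (n * al * ddx - n * al * Qx) * (yp + n * dy + al * Py + n * al * ddy)
     + (xp + n * dx + al * Px + n * al * ddx) * (n * al * ddy - n * al * Qy)
     - (n * al * ddx - n * al * Qx) * (n * al * ddy - n * al * Qy)"
    by (simp add: algebra_simps)
  also have "\<dots> = n * al * DM - n * al * QZ"
    unfolding h1 h2 h3 h4 h5 h6 by (simp add: algebra_simps)
  finally show ?thesis by (simp add: algebra_simps)
qed

lemma I2g:
  assumes "prime p"
  shows "of_nat p * al * (DMf p al x X dx ddx y Y dy ddy - Qf p al be (x * y) (Zf al x X y Y) (dZf p al be x X dx dX y Y dy dY))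
   = of_nat p * al * ((ddx - Qf p al be x X dX) * Uf p al y Y dy ddy + Uf p al x X dx ddx * (ddy - Qf p al be y Y dY)
      - of_nat p * al * (ddx - Qf p al be x X dX) * (ddy - Qf p al be y Y (dY::'a::comm_ring_1)))"
proof -
  have xy: "x * y + al * Zf al x X y Y = (x + al * X) * (y + al * Y)"
    unfolding Zf_def by (simp add: algebra_simps)
  have h5: "of_nat p * al * Qf p al be (x * y) (Zf al x X y Y) (dZf p al be x X dx dX y Y dy dY)
     = (al ^ p + of_nat p * al * be) * ((X ^ p + of_nat p * dX) * (y ^ p + of_nat p * dy) + (x ^ p + of_nat p * dx) * (Y ^ p + of_nat p * dY)
      + (al ^ p + of_nat p * al * be) * (X ^ p + of_nat p * dX) * (Y ^ p + of_nat p * dY)) + x ^ p * y ^ p - (x + al * X) ^ p * (y + al * Y) ^ p"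
    unfolding G3[OF assms] xy ZdZ[OF assms, symmetric] by (simp add: power_mult_distrib)
  have h6: "of_nat p * al * DMf p al x X dx ddx y Y dy ddy = ((x + al * X) ^ p + of_nat p * dx + of_nat p * al * ddx) * ((y + al * Y) ^ p + of_nat p * dy + of_nat p * al * ddy)
     - (x + al * X) ^ p * (y + al * Y) ^ p - of_nat p * (dx * y ^ p + x ^ p * dy + of_nat p * dx * dy)"
    unfolding DMf_def by (rule abstrDM) (rule G1)+
  show ?thesis unfolding Uf_def
    by (rule abstrFinal[OF G1 G1 G3[OF assms] G3[OF assms] h5 h6])
qed

lemma hom_dmul: "ring_hom_map h \<Longrightarrow> h (dmul p a b da db) = dmul p (h a) (h b) (h da) (h db)"
  unfolding dmul_def by (simp add: rhm_simps)
lemma hom_Zf: "ring_hom_map h \<Longrightarrow> h (Zf al x X y Y) = Zf (h al) (h x) (h X) (h y) (h Y)"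
  unfolding Zf_def by (simp add: rhm_simps)
lemma hom_dZf: "ring_hom_map h \<Longrightarrow> h (dZf p al be x X dx dX y Y dy dY) = dZf p (h al) (h be) (h x) (h X) (h dx) (h dX) (h y) (h Y) (h dy) (h dY)"
  unfolding dZf_def by (simp add: rhm_simps hom_dmul hom_cS)
lemma hom_DMf: "ring_hom_map h \<Longrightarrow> h (DMf p al x X dx ddx y Y dy ddy) = DMf p (h al) (h x) (h X) (h dx) (h ddx) (h y) (h Y) (h dy) (h ddy)"
  unfolding DMf_def by (simp add: rhm_simps hom_Pn)
lemma hom_Uf: "ring_hom_map h \<Longrightarrow> h (Uf p al x X dx ddx) = Uf p (h al) (h x) (h X) (h dx) (h ddx)"
  unfolding Uf_def by (simp add: rhm_simps hom_Pn)

lemma I2: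
  assumes "prime p"
  shows "DMf p al x X dx ddx y Y dy ddy - Qf p al be (x * y) (Zf al x X y Y) (dZf p al be x X dx dX y Y dy dY)
   = (ddx - Qf p al be x X dX) * Uf p al y Y dy ddy + Uf p al x X dx ddx * (ddy - Qf p al be y Y dY)
      - of_nat p * al * (ddx - Qf p al be x X dX) * (ddy - Qf p al be y Y (dY::'a::comm_ring_1))"
proof -
  define xs :: "nat \<Rightarrow> 'a" where "xs = (\<lambda>k. if k = 1 then x else if k = 2 then y else if k = 3 then X
     else if k = 4 then Y else if k = 5 then dx else if k = 6 then dy else if k = 7 then dX
     else if k = 8 then dY else if k = 9 then ddx else if k = 10 then ddy else if k = 11 then al else be)"
  have p0: "p > 0" using prime_gt_0_nat[OF assms] .
  have u: "DMf p (V 11) (V 1) (V 3) (V 5) (V 9) (V 2) (V 4) (V 6) (V 10)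
      - Qf p (V 11) (V 12) (V 1 * V 2) (Zf (V 11) (V 1) (V 3) (V 2) (V 4)) (dZf p (V 11) (V 12) (V 1) (V 3) (V 5) (V 7) (V 2) (V 4) (V 6) (V 8))
   = (V 9 - Qf p (V 11) (V 12) (V 1) (V 3) (V 7)) * Uf p (V 11) (V 2) (V 4) (V 6) (V 10)
     + Uf p (V 11) (V 1) (V 3) (V 5) (V 9) * (V 10 - Qf p (V 11) (V 12) (V 2) (V 4) (V 8))
      - of_nat p * V 11 * (V 9 - Qf p (V 11) (V 12) (V 1) (V 3) (V 7)) * (V 10 - Qf p (V 11) (V 12) (V 2) (V 4) (V 8))"
    by (rule cancel_u12[OF I2g[OF assms] p0])
  have "ev12 xs (DMf p (V 11) (V 1) (V 3) (V 5) (V 9) (V 2) (V 4) (V 6) (V 10)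
      - Qf p (V 11) (V 12) (V 1 * V 2) (Zf (V 11) (V 1) (V 3) (V 2) (V 4)) (dZf p (V 11) (V 12) (V 1) (V 3) (V 5) (V 7) (V 2) (V 4) (V 6) (V 8)))
   = ev12 xs ((V 9 - Qf p (V 11) (V 12) (V 1) (V 3) (V 7)) * Uf p (V 11) (V 2) (V 4) (V 6) (V 10)
     + Uf p (V 11) (V 1) (V 3) (V 5) (V 9) * (V 10 - Qf p (V 11) (V 12) (V 2) (V 4) (V 8))
      - of_nat p * V 11 * (V 9 - Qf p (V 11) (V 12) (V 1) (V 3) (V 7)) * (V 10 - Qf p (V 11) (V 12) (V 2) (V 4) (V 8)))"
    unfolding u ..
  then show ?thesis
    by (simp add: ev12_hom rhm_simps hom_Qf hom_DMf hom_Zf hom_dZf hom_Uf ev12_V xs_def)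
qed


lemma cancel_V: "V k * a = V k * b \<Longrightarrow> a = (b::u12)"
  using V_nz[of k] by simp

lemma PnSuc_g: "al * Pn (Suc n) al x X = al * (X * x ^ n + x * Pn n al x X + al * X * Pn n al x (X::'a::comm_ring_1))"
proof -
  have "al * (X * x ^ n + x * Pn n al x X + al * X * Pn n al x X) = al * X * x ^ n + (x + al * X) * (al * Pn n al x X)"
    by (simp add: algebra_simps)
  also have "\<dots> = (x + al * X) ^ Suc n - x ^ Suc n" unfolding G1 by (simp add: algebra_simps)
  finally show ?thesis unfolding G1 ..
qed

lemma PnSuc: "Pn (Suc n) al x X = X * x ^ n + x * Pn n al x X + al * X * Pn n al x (X::'a::comm_ring_1)"
proof -
  define xs :: "nat \<Rightarrow> 'a" where "xs = (\<lambda>k. if k = 1 then x else if k = 2 then X else al)"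
  have u: "Pn (Suc n) (V 3) (V 1) (V 2) = V 2 * V 1 ^ n + V 1 * Pn n (V 3) (V 1) (V 2) + V 3 * V 2 * Pn n (V 3) (V 1) (V 2)"
    by (rule cancel_V[OF PnSuc_g])
  have "ev12 xs (Pn (Suc n) (V 3) (V 1) (V 2)) = ev12 xs (V 2 * V 1 ^ n + V 1 * Pn n (V 3) (V 1) (V 2) + V 3 * V 2 * Pn n (V 3) (V 1) (V 2))"
    unfolding u ..
  then show ?thesis by (simp add: ev12_hom rhm_simps hom_Pn ev12_V xs_def)
qed

lemma Pn_0: "Pn 0 al x X = 0" unfolding Pn_def by simp

section \<open>alpha-derivations\<close>

context
  fixes \<phi> :: "'r::comm_ring_1 \<Rightarrow> 'a::comm_ring_1" and al :: 'a and D :: "'a \<Rightarrow> 'a"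
  assumes der: "alpha_derivation \<phi> al D" and phom: "ring_hom_map \<phi>"
begin

lemma D_add: "D (x + y) = D x + D y" using der unfolding alpha_derivation_def by auto
lemma D_mult: "D (x * y) = D x * y + x * D y + al * D x * D y" using der unfolding alpha_derivation_def by auto
lemma D_1: "D 1 = 0" using der unfolding alpha_derivation_def by auto
lemma D_lin: "D (\<phi> r * x) = \<phi> r * D x" using der unfolding alpha_derivation_def by auto
lemma D_0: "D 0 = 0" using D_add[of 0 0] by simp
lemma D_uminus: "D (- x) = - D x" using D_add[of x "-x"] D_0 by (simp add: add_eq_0_iff)
lemma D_diff: "D (x - y) = D x - D y" using D_add[of x "-y"] D_uminus[of y] by simp
lemma D_phi: "D (\<phi> r) = 0" using D_lin[of r 1] D_1 by simp
lemma D_of_nat: "D (of_nat k * x) = of_nat k * D x"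
  using D_lin[of "of_nat k" x] rhm_of_nat[OF phom, of k] by simp
lemma D_ofn: "D (of_nat k) = 0"
  using D_phi[of "of_nat k"] rhm_of_nat[OF phom, of k] by simp
lemma D_sum: "D (sum f A) = (\<Sum>i\<in>A. D (f i))"
  by (induction A rule: infinite_finite_induct) (simp_all add: D_0 D_add)
lemma D_power: "D (x ^ n) = Pn n al x (D x)"
  by (induction n) (simp_all add: Pn_0 D_1 PnSuc D_mult)

lemma D_cS: "D (cS p x y) = DS p al x (D x) y (D y)"
  unfolding cS_def DS_def D_sum
  by (rule sum.cong) (simp_all add: D_mult D_ofn D_power algebra_simps)

end


section \<open>delta-ring facts\<close>

lemma dr_0: "delta_ring p d \<Longrightarrow> d 0 = 0" unfolding delta_ring_def by auto
lemma dr_1: "delta_ring p d \<Longrightarrow> d 1 = 0" unfolding delta_ring_def by auto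
lemma dr_add: "delta_ring p d \<Longrightarrow> d (x + y) = d x + d y - cS p x y" unfolding delta_ring_def cS_def by auto
lemma dr_mult: "delta_ring p d \<Longrightarrow> d (x * y) = dmul p x y (d x) (d y)" unfolding delta_ring_def dmul_def by auto

lemma ig_mult: "x \<in> ideal_gen S \<Longrightarrow> a * x \<in> ideal_gen S"
proof (induction x rule: ideal_gen.induct)
  case gen_zero then show ?case by (simp add: ideal_gen.gen_zero)
next
  case (gen_mult s b) then show ?case using ideal_gen.gen_mult[of s S "a * b"] by (simp add: mult.assoc)
next
  case (gen_add x y) then show ?case by (simp add: distrib_left ideal_gen.gen_add)
qed

lemma ig_mult': "x \<in> ideal_gen S \<Longrightarrow> x * a \<in> ideal_gen S"
  using ig_mult[of x S a] by (simp add: mult.commute)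

lemma ig_gen: "s \<in> S \<Longrightarrow> s \<in> ideal_gen S"
  using ideal_gen.gen_mult[of s S 1] by simp

lemma ig_diff: "x \<in> ideal_gen S \<Longrightarrow> y \<in> ideal_gen S \<Longrightarrow> x - y \<in> ideal_gen S"
  using ideal_gen.gen_add[of x S "(-1) * y"] ig_mult[of y S "-1"] by simp

context
  fixes p :: nat and \<delta>R :: "'r::comm_ring_1 \<Rightarrow> 'r" and \<delta>A :: "'a::comm_ring_1 \<Rightarrow> 'a"
    and \<phi> :: "'r \<Rightarrow> 'a" and I :: "'r set" and al be :: 'a and D :: "'a \<Rightarrow> 'a"
  assumes pp: "prime p" and dalg: "delta_algebra p \<delta>R \<delta>A \<phi>"
    and II: "is_ideal I" and pI: "of_nat p \<in> I"
    and dal: "\<delta>A al = al * be" and der: "alpha_derivation \<phi> al D"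
begin

lemma p0: "p > 0" using prime_gt_0_nat[OF pp] .
lemma drR: "delta_ring p \<delta>R" using dalg unfolding delta_algebra_def by auto
lemma drA: "delta_ring p \<delta>A" using dalg unfolding delta_algebra_def by auto
lemma phom: "ring_hom_map \<phi>" using dalg unfolding delta_algebra_def by auto
lemma phid: "\<phi> (\<delta>R r) = \<delta>A (\<phi> r)" using dalg unfolding delta_algebra_def by auto

definition EE :: "'a \<Rightarrow> 'a" where
  "EE x = D (\<delta>A x) - Qf p al be x (D x) (\<delta>A (D x))"

definition UU :: "'a \<Rightarrow> 'a" where
  "UU x = Uf p al x (D x) (\<delta>A x) (D (\<delta>A x))"

lemma compat_iff: "delta_compatible_elem p \<delta>A al be D x \<longleftrightarrow> EE x = 0"
  unfolding delta_compatible_elem_def EE_def Qf_def by simp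

lemmas Dl = D_add[OF der phom] D_mult[OF der phom] D_1[OF der phom] D_0[OF der phom] D_diff[OF der phom] D_uminus[OF der phom]
  D_phi[OF der phom] D_ofn[OF der phom] D_power[OF der phom] D_cS[OF der phom]

lemma EE_add: "EE (x + y) = EE x + EE y"
proof -
  have "Qf p al be (x + y) (D (x + y)) (\<delta>A (D (x + y))) = Qf p al be (x + y) (D x + D y) (\<delta>A (D x) + \<delta>A (D y) - cS p (D x) (D y))"
    by (simp add: Dl dr_add[OF drA])
  also have "\<dots> = Qf p al be x (D x) (\<delta>A (D x)) + Qf p al be y (D y) (\<delta>A (D y)) - DS p al x (D x) y (D y)"
    by (rule I1[OF pp])
  finally have q: "Qf p al be (x + y) (D (x + y)) (\<delta>A (D (x + y))) = Qf p al be x (D x) (\<delta>A (D x)) + Qf p al be y (D y) (\<delta>A (D y)) - DS p al x (D x) y (D y)" .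
  have d: "D (\<delta>A (x + y)) = D (\<delta>A x) + D (\<delta>A y) - DS p al x (D x) y (D y)"
    by (simp add: Dl dr_add[OF drA])
  show ?thesis unfolding EE_def q d by (simp add: algebra_simps)
qed

lemma EE_mult: "EE (x * y) = EE x * UU y + UU x * EE y - of_nat p * al * EE x * EE y"
proof -
  have d: "D (\<delta>A (x * y)) = DMf p al x (D x) (\<delta>A x) (D (\<delta>A x)) y (D y) (\<delta>A y) (D (\<delta>A y))"
    unfolding dr_mult[OF drA] dmul_def DMf_def by (simp add: Dl algebra_simps)
  have z: "D (x * y) = Zf al x (D x) y (D y)"
    unfolding Zf_def by (simp add: Dl)
  have dz: "\<delta>A (Zf al x (D x) y (D y)) = dZf p al be x (D x) (\<delta>A x) (\<delta>A (D x)) y (D y) (\<delta>A y) (\<delta>A (D y))"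
    unfolding Zf_def dZf_def by (simp add: dr_add[OF drA] dr_mult[OF drA] dal)
  show ?thesis unfolding EE_def UU_def d z dz
    by (rule I2[OF pp])
qed


lemma Pn_X0: "Pn n a x 0 = 0" unfolding Pn_def by (rule sum.neutral) (auto simp: power_0_left)

definition FF :: "'a \<Rightarrow> 'a" where "FF x = x ^ p + of_nat p * \<delta>A x"

lemma UU_FF: "UU x = FF x + al * D (FF x)"
  unfolding UU_def Uf_def FF_def by (simp add: Dl D_of_nat[OF der phom])

lemma FF_add: "FF (x + y) = FF x + FF y"
  unfolding FF_def dr_add[OF drA] by (rule addF[OF pp])
lemma FF_mult: "FF (x * y) = FF x * FF y"
  unfolding FF_def dr_mult[OF drA] by (rule mulF)
lemma FF_1: "FF 1 = 1"
  unfolding FF_def dr_1[OF drA] by simp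

lemma UU_hom: "ring_hom_map UU"
  unfolding ring_hom_map_def UU_FF
  by (simp add: FF_add FF_mult FF_1 Dl algebra_simps)

lemma UU_phi: "UU (\<phi> r) = \<phi> (r ^ p + of_nat p * \<delta>R r)"
  unfolding UU_FF FF_def
  by (simp add: Dl rhm_simps phom phid[symmetric] D_of_nat[OF der phom] Pn_X0)

lemma EE_phi: "EE (\<phi> r) = 0"
proof -
  have "(0::'a) ^ p = 0" by (rule zero_power[OF p0])
  moreover have "(\<Sum>\<nu>\<in>{1..p - 1}. of_nat ((p choose \<nu>) div p) * \<phi> r ^ (p - \<nu>) * al ^ (\<nu> - 1) * (0::'a) ^ \<nu>) = 0"
    by (rule sum.neutral) (auto simp: power_0_left)
  ultimately show ?thesis
    unfolding EE_def Qf_def by (simp add: Dl phid[symmetric] dr_0[OF drA])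
qed

definition JJ :: "'a set" where "JJ = ext_ideal \<phi> I"
definition KK :: "nat \<Rightarrow> 'a set" where "KK n = ext_ideal \<phi> (ideal_pow I n)"

lemma KK_0: "KK 0 = UNIV"
proof -
  have "x \<in> KK 0" for x
  proof -
    have "\<phi> 1 \<in> \<phi> ` UNIV" by simp
    then have "x * \<phi> 1 \<in> ideal_gen (\<phi> ` UNIV)" by (rule ideal_gen.gen_mult)
    then show ?thesis unfolding KK_def ext_ideal_def by (simp add: rhm_1[OF phom])
  qed
  then show ?thesis by auto
qed

lemma JK: assumes "x \<in> JJ" "y \<in> KK n" shows "x * y \<in> KK (Suc n)"
  using assms(1) unfolding JJ_def ext_ideal_def
proof (induction x rule: ideal_gen.induct)
  case gen_zero then show ?case by (simp add: KK_def ext_ideal_def ideal_gen.gen_zero)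
next
  case (gen_add x1 x2) then show ?case by (simp add: distrib_right KK_def ext_ideal_def ideal_gen.gen_add)
next
  case (gen_mult s a)
  then obtain i where i: "i \<in> I" "s = \<phi> i" by auto
  from assms(2) show ?case unfolding KK_def ext_ideal_def
  proof (induction y rule: ideal_gen.induct)
    case gen_zero then show ?case by (simp add: ideal_gen.gen_zero)
  next
    case (gen_add y1 y2) then show ?case by (simp add: distrib_left ideal_gen.gen_add)
  next
    case (gen_mult t b)
    then obtain j where j: "j \<in> ideal_pow I n" "t = \<phi> j" by auto
    have "i * j \<in> ideal_pow I (Suc n)" using i j by (auto intro: ig_gen)
    then have "(a * b) * \<phi> (i * j) \<in> ideal_gen (\<phi> ` ideal_pow I (Suc n))"
      by (intro ideal_gen.gen_mult) auto
    then show ?case using i j by (simp add: rhm_mult[OF phom] algebra_simps)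
  qed
qed

lemma KK_mult: "y \<in> KK n \<Longrightarrow> a * y \<in> KK n"
  unfolding KK_def ext_ideal_def by (rule ig_mult)
lemma KK_add: "x \<in> KK n \<Longrightarrow> y \<in> KK n \<Longrightarrow> x + y \<in> KK n"
  unfolding KK_def ext_ideal_def by (rule ideal_gen.gen_add)
lemma KK_zero: "0 \<in> KK n"
  unfolding KK_def ext_ideal_def by (rule ideal_gen.gen_zero)

lemma p_JJ: "of_nat p \<in> JJ"
proof -
  have "\<phi> (of_nat p) \<in> \<phi> ` I" using pI by simp
  then show ?thesis unfolding JJ_def ext_ideal_def using ig_gen[of "\<phi> (of_nat p)" "\<phi> ` I"]
    by (simp add: rhm_of_nat[OF phom])
qed

lemma I_mult: "x \<in> I \<Longrightarrow> a * x \<in> I" using II unfolding is_ideal_def by auto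
lemma I_add: "x \<in> I \<Longrightarrow> y \<in> I \<Longrightarrow> x + y \<in> I" using II unfolding is_ideal_def by auto

lemma UU_JJ: "x \<in> JJ \<Longrightarrow> UU x \<in> JJ"
  unfolding JJ_def ext_ideal_def
proof (induction x rule: ideal_gen.induct)
  case gen_zero then show ?case by (simp add: rhm_0[OF UU_hom] ideal_gen.gen_zero)
next
  case (gen_add x1 x2) then show ?case by (simp add: rhm_add[OF UU_hom] ideal_gen.gen_add)
next
  case (gen_mult s a)
  then obtain i where i: "i \<in> I" "s = \<phi> i" by auto
  have "i ^ p = i ^ (p - 1) * i" using p0 by (metis power_minus_mult)
  then have "i ^ p \<in> I" using I_mult[OF i(1)] by simp
  moreover have "of_nat p * \<delta>R i \<in> I" using I_mult[OF pI, of "\<delta>R i"] by (simp add: mult.commute)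
  ultimately have "i ^ p + of_nat p * \<delta>R i \<in> I" by (rule I_add)
  then show ?case using i
    by (simp add: rhm_mult[OF UU_hom] UU_phi ideal_gen.gen_mult)
qed


definition LL :: "('a \<Rightarrow>\<^sub>0 'a) \<Rightarrow> 'a" where
  "LL u = (\<Sum>c\<in>Poly_Mapping.keys u. UU (Poly_Mapping.lookup u c) * EE c)"

lemma LL_sup: assumes "finite S" "Poly_Mapping.keys u \<subseteq> S"
  shows "LL u = (\<Sum>c\<in>S. UU (Poly_Mapping.lookup u c) * EE c)"
  unfolding LL_def
  by (rule sum.mono_neutral_left[OF assms]) (auto simp: not_in_keys_iff_lookup_eq_zero rhm_0[OF UU_hom])

lemma LL_add: "LL (u + v) = LL u + LL v"
proof -
  let ?S = "Poly_Mapping.keys u \<union> Poly_Mapping.keys v"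
  have f: "finite ?S" by simp
  have "LL (u + v) = (\<Sum>c\<in>?S. UU (Poly_Mapping.lookup (u + v) c) * EE c)"
    by (rule LL_sup[OF f keys_add])
  also have "\<dots> = (\<Sum>c\<in>?S. UU (Poly_Mapping.lookup u c) * EE c) + (\<Sum>c\<in>?S. UU (Poly_Mapping.lookup v c) * EE c)"
    by (simp add: lookup_add rhm_add[OF UU_hom] distrib_right sum.distrib)
  also have "\<dots> = LL u + LL v"
    by (simp add: LL_sup[OF f])
  finally show ?thesis .
qed

lemma LL_diff: "LL (u - v) = LL u - LL v"
proof -
  let ?S = "Poly_Mapping.keys u \<union> Poly_Mapping.keys v"
  have f: "finite ?S" by simp
  have "LL (u - v) = (\<Sum>c\<in>?S. UU (Poly_Mapping.lookup (u - v) c) * EE c)"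
    by (rule LL_sup[OF f keys_diff])
  also have "\<dots> = (\<Sum>c\<in>?S. UU (Poly_Mapping.lookup u c) * EE c) - (\<Sum>c\<in>?S. UU (Poly_Mapping.lookup v c) * EE c)"
    by (simp add: lookup_minus rhm_diff[OF UU_hom] left_diff_distrib sum_subtractf)
  also have "\<dots> = LL u - LL v"
    by (simp add: LL_sup[OF f])
  finally show ?thesis .
qed

lemma LL_single: "LL (Poly_Mapping.single c b) = UU b * EE c"
proof -
  have "LL (Poly_Mapping.single c b) = (\<Sum>c'\<in>{c}. UU (Poly_Mapping.lookup (Poly_Mapping.single c b) c') * EE c')"
    by (rule LL_sup) auto
  then show ?thesis by simp
qed

lemma LL_0: "LL 0 = 0" unfolding LL_def by simp

lemma LL_sum: "LL (\<Sum>i<(d::nat). Poly_Mapping.single (T i) (b i)) = (\<Sum>i<d. UU (b i) * EE (T i))"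
  by (induction d) (simp_all add: LL_0 LL_add LL_single)

lemma LL_rel:
  assumes IH: "\<And>x. EE x \<in> KK n" and r: "r \<in> kahler_rel \<phi> JJ"
  shows "LL r \<in> KK (Suc n)"
  using r
proof (induction r rule: kahler_rel.induct)
  case kr_zero then show ?case by (simp add: LL_0 KK_zero)
next
  case (kr_add_rel c c' b) then show ?case
    by (simp only: LL_diff LL_single EE_add) (simp add: algebra_simps KK_zero)
next
  case (kr_leibniz c c' b)
  have "LL (Poly_Mapping.single (c * c') b - Poly_Mapping.single c' (b * c) - Poly_Mapping.single c (b * c'))
     = UU b * (- (of_nat p * EE c) * (al * EE c'))"
    by (simp only: LL_diff LL_single EE_mult rhm_mult[OF UU_hom]) (simp add: algebra_simps)
  moreover have "of_nat p * EE c \<in> KK (Suc n)" by (rule JK[OF p_JJ IH])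
  then have "UU b * (- (of_nat p * EE c) * (al * EE c')) \<in> KK (Suc n)"
    using KK_mult[of "of_nat p * EE c" "Suc n" "- (UU b * (al * EE c'))"] by (simp add: algebra_simps)
  ultimately show ?case by simp
next
  case (kr_const r b) then show ?case by (simp add: LL_single EE_phi KK_zero)
next
  case (kr_ideal x c) then show ?case by (simp add: LL_single JK[OF UU_JJ IH])
next
  case (kr_plus u v) then show ?case by (simp add: LL_add KK_add)
qed

lemma EE_KK:
  assumes kb: "kahler_basis \<phi> (ext_ideal \<phi> I) d T"
    and T0: "\<forall>i<d. EE (T i) = 0"
  shows "EE x \<in> KK n"
proof (induction n arbitrary: x)
  case 0 then show ?case by (simp add: KK_0)
next
  case (Suc n)
  obtain b where b: "Poly_Mapping.single x 1 - (\<Sum>i<d. Poly_Mapping.single (T i) (b i)) \<in> kahler_rel \<phi> JJ"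
    using kb unfolding kahler_basis_def JJ_def by blast
  have "LL (Poly_Mapping.single x 1 - (\<Sum>i<d. Poly_Mapping.single (T i) (b i))) \<in> KK (Suc n)"
    by (rule LL_rel[OF Suc.IH b])
  moreover have "LL (Poly_Mapping.single x 1 - (\<Sum>i<d. Poly_Mapping.single (T i) (b i))) = EE x"
    using T0 by (simp add: LL_diff LL_single LL_sum rhm_1[OF UU_hom])
  ultimately show ?case by simp
qed


lemma main_ctx:
  assumes sep: "adically_separated \<phi> I" and kb: "kahler_basis \<phi> (ext_ideal \<phi> I) d T"
  shows "delta_compatible p \<delta>A al be D \<longleftrightarrow> (\<forall>i<d. delta_compatible_elem p \<delta>A al be D (T i))"
proof
  assume "delta_compatible p \<delta>A al be D"
  then show "\<forall>i<d. delta_compatible_elem p \<delta>A al be D (T i)" unfolding delta_compatible_def by blast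
next
  assume "\<forall>i<d. delta_compatible_elem p \<delta>A al be D (T i)"
  then have T0: "\<forall>i<d. EE (T i) = 0" by (simp add: compat_iff)
  have "EE x = 0" for x
  proof -
    have "EE x \<in> (\<Inter>n\<in>{1..}. ext_ideal \<phi> (ideal_pow I n))"
      using EE_KK[OF kb T0] unfolding KK_def by blast
    then show ?thesis using sep unfolding adically_separated_def by blast
  qed
  then show "delta_compatible p \<delta>A al be D" unfolding delta_compatible_def using compat_iff by blast
qed

end

theorem proposition6p12:
  fixes p :: nat
    and \<delta>R :: "'r::comm_ring_1 \<Rightarrow> 'r"
    and \<delta>A :: "'a::comm_ring_1 \<Rightarrow> 'a"
    and \<phi> :: "'r \<Rightarrow> 'a"
    and I :: "'r set"
    and d :: nat and T :: "nat \<Rightarrow> 'a"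
    and \<alpha> \<beta> :: 'a and D :: "'a \<Rightarrow> 'a"
  assumes "prime p"
    and "delta_algebra p \<delta>R \<delta>A \<phi>"
    and "is_ideal I" and "of_nat p \<in> I"
    and "adically_separated \<phi> I"
    and "\<forall>n\<ge>1. smooth_quot \<phi> (ideal_pow I n) (ext_ideal \<phi> (ideal_pow I n))"
    and "kahler_basis \<phi> (ext_ideal \<phi> I) d T"
    and "\<delta>A \<alpha> = \<alpha> * \<beta>"
    and "alpha_derivation \<phi> \<alpha> D"
  shows "delta_compatible p \<delta>A \<alpha> \<beta> D \<longleftrightarrow> (\<forall>i<d. delta_compatible_elem p \<delta>A \<alpha> \<beta> D (T i))"
  by (rule main_ctx[OF assms(1,2,3,4,8,9,5,7)])


end
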